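(* Let $n$ be a positive integer, let $\mathcal F$ be an $\mathcal N$-saturated family of subsets of $[n]$, and let $\mathcal G$ be a component of $\mathcal F$. Let $B_1,\dots,B_l$ be the minimal elements and $A_1,\dots,A_k$ the maximal elements of $\mathcal G$. Let $M\in\mathcal F$ be such that $\bigcup_{i=1}^l B_i\subseteq M\subseteq\bigcap_{i=1}^k A_i$, and such that $M$ is maximal (with respect to inclusion) among the sets of $\mathcal F$ with this property. Then every $X\in\mathcal G$ is comparable to $M$.
   Context: The poset $\mathcal N$ has four elements $a,b,c,d$ with $a<c$, $b<c$, $b<d$ and no other comparabilities. A family $\mathcal Q$ of sets (ordered by inclusion) contains an induced copy of $\mathcal N$ if there are distinct sets in $\mathcal Q$ whose inclusion relations are exactly those of $a,b,c,d$ above. A family $\mathcal F$ of subsets of $[n]=\{1,\dots,n\}$ is $\mathcal N$-saturated if $\mathcal F$ contains no induced copy of $\mathcal N$, but for every $S\subseteq[n]$ with $S\notin\mathcal F$, the family $\mathcal F\cup\{S\}$ contains an induced copy of $\mathcal N$. A component of $\mathcal F$ is the vertex set of a connected component of the Hasse diagram (as a graph) of the poset $(\mathcal F\setminus\{\emptyset,[n]\},\subseteq)$; its minimal and maximal elements are taken with respect to inclusion within the component. *)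

theory Defs
  imports Main
begin

definition has_induced_N :: "'a set set \<Rightarrow> bool" where
  "has_induced_N Q \<longleftrightarrow> (\<exists>a\<in>Q. \<exists>b\<in>Q. \<exists>c\<in>Q. \<exists>d\<in>Q.
     distinct [a, b, c, d] \<and>
     a \<subset> c \<and> b \<subset> c \<and> b \<subset> d \<and>
     \<not> a \<subseteq> b \<and> \<not> b \<subseteq> a \<and>
     \<not> a \<subseteq> d \<and> \<not> d \<subseteq> a \<and>
     \<not> c \<subseteq> d \<and> \<not> d \<subseteq> c)"

definition N_saturated :: "nat \<Rightarrow> nat set set \<Rightarrow> bool" where
  "N_saturated n F \<longleftrightarrow> F \<subseteq> Pow {1..n} \<and> \<not> has_induced_N F \<and>
     (\<forall>S. S \<subseteq> {1..n} \<longrightarrow> S \<notin> F \<longrightarrow> has_induced_N (insert S F))"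

definition inner_part :: "nat \<Rightarrow> nat set set \<Rightarrow> nat set set" where
  "inner_part n F = F - {{}, {1..n}}"

definition hasse_edges :: "'a set set \<Rightarrow> ('a set \<times> 'a set) set" where
  "hasse_edges P = {(X, Y). X \<in> P \<and> Y \<in> P \<and> X \<subset> Y \<and>
                            \<not> (\<exists>Z\<in>P. X \<subset> Z \<and> Z \<subset> Y)}"

definition is_component :: "nat \<Rightarrow> nat set set \<Rightarrow> nat set set \<Rightarrow> bool" where
  "is_component n F G \<longleftrightarrow> (\<exists>X\<in>inner_part n F.
     G = {Y. (X, Y) \<in> (hasse_edges (inner_part n F) \<union> (hasse_edges (inner_part n F))\<inverse>)\<^sup>*})"

definition minimal_elems :: "'a set set \<Rightarrow> 'a set set" where
  "minimal_elems G = {B \<in> G. \<not> (\<exists>Y\<in>G. Y \<subset> B)}"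

definition maximal_elems :: "'a set set \<Rightarrow> 'a set set" where
  "maximal_elems G = {A \<in> G. \<not> (\<exists>Y\<in>G. A \<subset> Y)}"

end

theory Submission
  imports Defs
begin

lemma chain_hasse:
  "finite W \<Longrightarrow> Z \<in> P \<Longrightarrow> W \<in> P \<Longrightarrow> Z \<subseteq> W \<Longrightarrow> (Z, W) \<in> (hasse_edges P)\<^sup>*"
proof (induction "card (W - Z)" arbitrary: Z W rule: less_induct)
  case less
  show ?case
  proof (cases "Z = W")
    case True then show ?thesis by simp
  next
    case False
    show ?thesis
    proof (cases "\<exists>V\<in>P. Z \<subset> V \<and> V \<subset> W")
      case True
      then obtain V where V: "V \<in> P" "Z \<subset> V" "V \<subset> W" by blast
      have fV: "finite V" using V less.prems(1) finite_subset by blast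
      have "W - V \<subset> W - Z" using V by blast
      hence c1: "card (W - V) < card (W - Z)" using less.prems(1) by (simp add: psubset_card_mono)
      have "V - Z \<subset> W - Z" using V by blast
      hence c2: "card (V - Z) < card (W - Z)" using less.prems(1) by (simp add: psubset_card_mono)
      have "(Z, V) \<in> (hasse_edges P)\<^sup>*" using less.hyps[OF c2 fV less.prems(2) V(1)] V by blast
      moreover have "(V, W) \<in> (hasse_edges P)\<^sup>*" using less.hyps[OF c1 less.prems(1) V(1) less.prems(3)] V by blast
      ultimately show ?thesis by (rule rtrancl_trans)
    next
      case False
      hence "(Z, W) \<in> hasse_edges P" using less.prems \<open>Z \<noteq> W\<close> unfolding hasse_edges_def by blast
      then show ?thesis by blast
    qed
  qed
qed

lemma reach_in_P:
  assumes "(X, Y) \<in> (hasse_edges P \<union> (hasse_edges P)\<inverse>)\<^sup>*" "X \<in> P"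
  shows "Y \<in> P"
  using assms
proof (induction rule: rtrancl_induct)
  case base then show ?case by simp
next
  case (step y z) then show ?case unfolding hasse_edges_def by blast
qed

lemma reach_comp:
  assumes "(X, W) \<in> (hasse_edges P \<union> (hasse_edges P)\<inverse>)\<^sup>*" "W \<in> P" "Z \<in> P" "finite W" "finite Z"
    and "Z \<subseteq> W \<or> W \<subseteq> Z"
  shows "(X, Z) \<in> (hasse_edges P \<union> (hasse_edges P)\<inverse>)\<^sup>*"
proof -
  let ?H = "hasse_edges P"
  have "(W, Z) \<in> (?H \<union> ?H\<inverse>)\<^sup>*"
  proof (cases "W \<subseteq> Z")
    case True
    then have "(W, Z) \<in> ?H\<^sup>*" using chain_hasse assms by blast
    then show ?thesis using rtrancl_mono[of ?H "?H \<union> ?H\<inverse>"] by blast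
  next
    case False
    then have "(Z, W) \<in> ?H\<^sup>*" using chain_hasse assms by blast
    then have "(W, Z) \<in> (?H\<inverse>)\<^sup>*" by (simp add: rtrancl_converse)
    then show ?thesis using rtrancl_mono[of "?H\<inverse>" "?H \<union> ?H\<inverse>"] by blast
  qed
  then show ?thesis using assms(1) by (rule rtrancl_trans[rotated])
qed

lemma mkN:
  assumes "a \<in> Q" "b \<in> Q" "c \<in> Q" "d \<in> Q" "a \<subset> c" "b \<subset> c" "b \<subset> d"
    "\<not> a \<subseteq> b" "\<not> b \<subseteq> a" "\<not> a \<subseteq> d" "\<not> d \<subseteq> a" "\<not> c \<subseteq> d" "\<not> d \<subseteq> c"
  shows "has_induced_N Q"
proof -
  have "distinct [a, b, c, d]" using assms by auto
  then show ?thesis unfolding has_induced_N_def using assms by blast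
qed

theorem lemma2p6:
  fixes n :: nat and F G :: "nat set set" and M :: "nat set"
  assumes "n \<ge> 1"
    and "N_saturated n F"
    and "is_component n F G"
    and "M \<in> F"
    and "\<Union> (minimal_elems G) \<subseteq> M" and "M \<subseteq> \<Inter> (maximal_elems G)"
    and "\<And>M'. M' \<in> F \<Longrightarrow> \<Union> (minimal_elems G) \<subseteq> M' \<Longrightarrow>
              M' \<subseteq> \<Inter> (maximal_elems G) \<Longrightarrow> \<not> M \<subset> M'"
  shows "\<forall>X\<in>G. X \<subseteq> M \<or> M \<subseteq> X"
proof (rule ccontr)
  assume "\<not> (\<forall>X\<in>G. X \<subseteq> M \<or> M \<subseteq> X)"
  define P where "P = inner_part n F"
  define Mx where "Mx = maximal_elems G"
  define U where "U = \<Union> (minimal_elems G)"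
  define T where "T = {X\<in>G. \<not> (X \<subseteq> M \<or> M \<subseteq> X)}"
  define S where "S = M \<union> \<Union>T"
  have FP: "F \<subseteq> Pow {1..n}" and NF: "\<not> has_induced_N F"
    and sat: "\<And>S. S \<subseteq> {1..n} \<Longrightarrow> S \<notin> F \<Longrightarrow> has_induced_N (insert S F)"
    using assms(2) unfolding N_saturated_def by auto
  obtain X0 where X0: "X0 \<in> P" and Gdef: "G = {Y. (X0, Y) \<in> (hasse_edges P \<union> (hasse_edges P)\<inverse>)\<^sup>*}"
    using assms(3) unfolding is_component_def P_def by blast
  have GP: "G \<subseteq> P" using reach_in_P X0 Gdef by blast
  have PF: "P \<subseteq> F" unfolding P_def inner_part_def by blast
  have fin: "\<And>Z. Z \<in> F \<Longrightarrow> finite Z" using FP finite_subset by blast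
  have memb: "Z \<in> G" if "Z \<in> F" "Z \<noteq> {}" "Z \<noteq> {1..n}" "W \<in> G" "Z \<subseteq> W \<or> W \<subseteq> Z" for Z W
  proof -
    have "Z \<in> P" using that unfolding P_def inner_part_def by blast
    moreover have "W \<in> P" using that GP by blast
    ultimately show ?thesis using reach_comp[of X0 W P Z] that Gdef fin PF by blast
  qed
  have finG: "finite G" using GP PF FP finite_Pow_iff finite_subset
    by (metis finite_atLeastAtMost order_trans)
  have maxab: "\<exists>A\<in>Mx. Z \<subseteq> A" if ZG: "Z \<in> G" for Z
  proof -
    obtain m where "m \<in> G" "Z \<subseteq> m" "\<forall>b\<in>G. m \<subseteq> b \<longrightarrow> m = b"
      using finite_has_maximal2[OF finG ZG] by blast
    then show ?thesis unfolding Mx_def maximal_elems_def by blast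
  qed
  have MxG: "Mx \<subseteq> G" unfolding Mx_def maximal_elems_def by blast
  have MA: "\<And>A. A \<in> Mx \<Longrightarrow> M \<subseteq> A" using assms(6) unfolding Mx_def by blast
  obtain X1 where X1: "X1 \<in> T" using \<open>\<not> (\<forall>X\<in>G. X \<subseteq> M \<or> M \<subseteq> X)\<close> unfolding T_def by blast
  have TG: "T \<subseteq> G" unfolding T_def by blast
  obtain A1 where A1: "A1 \<in> Mx" using maxab X1 TG by blast
  have A1n: "A1 \<subseteq> {1..n}" using A1 MxG GP PF FP by blast
  have TI: "X \<subseteq> A" if XAh: "X \<in> T" "A \<in> Mx" for X A
  proof (rule ccontr)
    assume nXA: "\<not> X \<subseteq> A"
    obtain A0 where A0: "A0 \<in> Mx" "X \<subseteq> A0" using maxab XAh TG by blast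
    have XT: "\<not> X \<subseteq> M" "\<not> M \<subseteq> X" using XAh unfolding T_def by auto
    have "\<not> A \<subset> A0" using XAh(2) A0 MxG unfolding Mx_def maximal_elems_def by blast
    have "has_induced_N F"
    proof (rule mkN[of X F M A0 A])
      show "X \<in> F" "M \<in> F" "A0 \<in> F" "A \<in> F" using XAh A0 TG MxG GP PF assms(4) by blast+
      show "X \<subset> A0" using A0 XT MA[OF A0(1)] by blast
      show "M \<subset> A0" using A0 XT MA[OF A0(1)] by blast
      show "M \<subset> A" using A0 XT MA[OF XAh(2)] nXA \<open>\<not> A \<subset> A0\<close> MA[OF A0(1)] by blast
      show "\<not> X \<subseteq> M" "\<not> M \<subseteq> X" "\<not> X \<subseteq> A" using XT nXA by auto
      show "\<not> A \<subseteq> X" using \<open>\<not> A \<subset> A0\<close> A0 nXA by blast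
      show "\<not> A0 \<subseteq> A" using A0 nXA by blast
      show "\<not> A \<subseteq> A0" using \<open>\<not> A \<subset> A0\<close> A0 nXA by blast
    qed
    then show False using NF by blast
  qed
  have TS: "\<And>X. X \<in> T \<Longrightarrow> X \<subseteq> S" unfolding S_def by blast
  have Tinc: "\<And>X. X \<in> T \<Longrightarrow> \<not> X \<subseteq> M \<and> \<not> M \<subseteq> X" unfolding T_def by blast
  have SA: "\<And>A. A \<in> Mx \<Longrightarrow> S \<subseteq> A" using TI MA unfolding S_def by blast
  have SI: "S \<subseteq> \<Inter> (maximal_elems G)" using SA unfolding Mx_def by blast
  have MS: "M \<subset> S" using X1 Tinc TS unfolding S_def by blast
  have US: "U \<subseteq> S" using assms(5) MS unfolding U_def by blast
  have SnF: "S \<notin> F" using assms(7)[of S] SI US MS unfolding U_def by blast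
  have Sn: "S \<subseteq> {1..n}" using SA[OF A1] A1n by blast
  have K2: "M \<subseteq> Z" if "Z \<in> G" "\<not> Z \<subseteq> S" for Z
    using that TS MS unfolding T_def by blast
  have K3: "\<exists>X\<in>T. \<not> X \<subseteq> Z" if "M \<subseteq> Z" "\<not> S \<subseteq> Z" for Z
    using that unfolding S_def by blast
  have K4: "\<exists>A\<in>Mx. \<not> Z \<subseteq> A" if "Z \<in> F" "M \<subseteq> Z" "\<not> Z \<subseteq> S" for Z
  proof (rule ccontr)
    assume "\<not> (\<exists>A\<in>Mx. \<not> Z \<subseteq> A)"
    then have "Z \<subseteq> \<Inter> (maximal_elems G)" unfolding Mx_def by blast
    moreover have "M \<subset> Z" using that MS by blast
    moreover have "\<Union> (minimal_elems G) \<subseteq> Z" using assms(5) that by blast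
    ultimately show False using assms(7)[OF that(1)] by blast
  qed
  have X1G: "X1 \<in> G" using X1 TG by blast
  have A1G: "A1 \<in> G" using A1 MxG by blast
  have XF: "\<And>X. X \<in> T \<Longrightarrow> X \<in> F" using TG GP PF by blast
  have AF: "\<And>A. A \<in> Mx \<Longrightarrow> A \<in> F" using MxG GP PF by blast
  have "has_induced_N (insert S F)" using sat Sn SnF by blast
  then obtain a b c d where abcd: "a \<in> insert S F" "b \<in> insert S F" "c \<in> insert S F" "d \<in> insert S F"
    "distinct [a, b, c, d]" "a \<subset> c" "b \<subset> c" "b \<subset> d"
    "\<not> a \<subseteq> b" "\<not> b \<subseteq> a" "\<not> a \<subseteq> d" "\<not> d \<subseteq> a" "\<not> c \<subseteq> d" "\<not> d \<subseteq> c"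
    unfolding has_induced_N_def by blast
  consider "a = S" | "b = S" | "c = S" | "d = S" | "a \<in> F" "b \<in> F" "c \<in> F" "d \<in> F"
    using abcd(1-4) by blast
  then show False
  proof cases
    case 1
    then have F: "b \<in> F" "c \<in> F" "d \<in> F" using abcd by auto
    have "d \<subseteq> {1..n}" using FP F(3) by blast
    then have "c \<noteq> {}" "c \<noteq> {1..n}" using abcd(6,14) 1 Sn by auto
    moreover have "X1 \<subseteq> c" using TS[OF X1] abcd(6) 1 by blast
    ultimately have cG: "c \<in> G" using memb[OF F(2) _ _ X1G] by blast
    have "c \<subseteq> {1..n}" using FP F(2) by blast
    then have "b \<noteq> {}" "b \<noteq> {1..n}" using abcd(7,10) 1 by auto
    then have bG: "b \<in> G" using memb[OF F(1) _ _ cG] abcd(7) by blast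
    have Mb: "M \<subseteq> b" using K2[OF bG] abcd(10) 1 by blast
    then obtain X where X: "X \<in> T" "\<not> X \<subseteq> d" using K3[of d] abcd(8,11) 1 by blast
    have XS: "X \<subseteq> S" "\<not> X \<subseteq> M" "\<not> M \<subseteq> X" using TS Tinc X by auto
    have "has_induced_N F"
    proof (rule mkN[of X F b c d])
      show "X \<in> F" using XF X by blast
      show "b \<in> F" "c \<in> F" "d \<in> F" using F by auto
      show "X \<subset> c" using XS abcd(6) 1 by blast
      show "b \<subset> c" "b \<subset> d" "\<not> c \<subseteq> d" "\<not> d \<subseteq> c" using abcd by auto
      show "\<not> X \<subseteq> b" using X abcd(8) by blast
      show "\<not> b \<subseteq> X" using Mb XS by blast
      show "\<not> X \<subseteq> d" using X by blast
      show "\<not> d \<subseteq> X" using Mb XS abcd(8) by blast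
    qed
    then show False using NF by blast
  next
    case 2
    then have F: "a \<in> F" "c \<in> F" "d \<in> F" using abcd by auto
    have "d \<subseteq> {1..n}" using FP F(3) by blast
    then have "c \<noteq> {}" "c \<noteq> {1..n}" using abcd(7,14) 2 Sn by auto
    moreover have "X1 \<subseteq> c" using TS[OF X1] abcd(7) 2 by blast
    ultimately have cG: "c \<in> G" using memb[OF F(2) _ _ X1G] by blast
    have "c \<subseteq> {1..n}" using FP F(2) by blast
    then have "a \<noteq> {}" "a \<noteq> {1..n}" using abcd(9,6) 2 by auto
    then have aG: "a \<in> G" using memb[OF F(1) _ _ cG] abcd(6) by blast
    have Ma: "M \<subseteq> a" using K2[OF aG] abcd(9) 2 by blast
    then obtain X where X: "X \<in> T" "\<not> X \<subseteq> a" using K3[of a] abcd(10) 2 by blast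
    have XS: "X \<subseteq> S" "\<not> X \<subseteq> M" "\<not> M \<subseteq> X" using TS Tinc X by auto
    have "has_induced_N F"
    proof (rule mkN[of a F X c d])
      show "X \<in> F" using XF X by blast
      show "a \<in> F" "c \<in> F" "d \<in> F" using F by auto
      show "X \<subset> c" using XS abcd(7) 2 by blast
      show "X \<subset> d" using XS abcd(8) 2 by blast
      show "a \<subset> c" "\<not> a \<subseteq> d" "\<not> d \<subseteq> a" "\<not> c \<subseteq> d" "\<not> d \<subseteq> c" using abcd by auto
      show "\<not> X \<subseteq> a" using X by blast
      show "\<not> a \<subseteq> X" using Ma XS by blast
    qed
    then show False using NF by blast
  next
    case 3
    then have F: "a \<in> F" "b \<in> F" "d \<in> F" using abcd by auto
    have "b \<noteq> {}" "b \<noteq> {1..n}" "b \<subseteq> A1" using abcd(10,7) 3 SA[OF A1] A1n by auto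
    then have bG: "b \<in> G" using memb[OF F(2) _ _ A1G] by blast
    have "d \<noteq> {}" "d \<noteq> {1..n}" using abcd(8,13) 3 Sn by auto
    then have dG: "d \<in> G" using memb[OF F(3) _ _ bG] abcd(8) by blast
    have "M \<subseteq> d" using K2[OF dG] abcd(14) 3 by blast
    then obtain A where A: "A \<in> Mx" "\<not> d \<subseteq> A" using K4[OF F(3)] abcd(14) 3 by blast
    have SAA: "S \<subseteq> A" using SA A by blast
    have "has_induced_N F"
    proof (rule mkN[of a F b A d])
      show "A \<in> F" using AF A by blast
      show "a \<in> F" "b \<in> F" "d \<in> F" using F by auto
      show "a \<subset> A" using SAA abcd(6) 3 by blast
      show "b \<subset> A" using SAA abcd(7) 3 by blast
      show "b \<subset> d" "\<not> a \<subseteq> b" "\<not> b \<subseteq> a" "\<not> a \<subseteq> d" "\<not> d \<subseteq> a" using abcd by auto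
      show "\<not> d \<subseteq> A" using A by blast
      show "\<not> A \<subseteq> d" using SAA abcd(13) 3 by blast
    qed
    then show False using NF by blast
  next
    case 4
    then have F: "a \<in> F" "b \<in> F" "c \<in> F" using abcd by auto
    have "b \<noteq> {}" "b \<noteq> {1..n}" "b \<subseteq> A1" using abcd(10,8) 4 SA[OF A1] A1n by auto
    then have bG: "b \<in> G" using memb[OF F(2) _ _ A1G] by blast
    have "c \<noteq> {}" "c \<noteq> {1..n}" using abcd(7,14) 4 Sn by auto
    then have cG: "c \<in> G" using memb[OF F(3) _ _ bG] abcd(7) by blast
    have "c \<subseteq> {1..n}" using FP F(3) by blast
    then have "a \<noteq> {}" "a \<noteq> {1..n}" using abcd(9,6) 4 by auto
    then have aG: "a \<in> G" using memb[OF F(1) _ _ cG] abcd(6) by blast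
    have "M \<subseteq> a" using K2[OF aG] abcd(11) 4 by blast
    then obtain A where A: "A \<in> Mx" "\<not> a \<subseteq> A" using K4[OF F(1)] abcd(11) 4 by blast
    have SAA: "S \<subseteq> A" using SA A by blast
    have "has_induced_N F"
    proof (rule mkN[of a F b c A])
      show "A \<in> F" using AF A by blast
      show "a \<in> F" "b \<in> F" "c \<in> F" using F by auto
      show "b \<subset> A" using SAA abcd(8) 4 by blast
      show "a \<subset> c" "b \<subset> c" "\<not> a \<subseteq> b" "\<not> b \<subseteq> a" using abcd by auto
      show "\<not> a \<subseteq> A" using A by blast
      show "\<not> A \<subseteq> a" using SAA abcd(12) 4 by blast
      show "\<not> c \<subseteq> A" using A abcd(6) by blast
      show "\<not> A \<subseteq> c" using SAA abcd(14) 4 by blast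
    qed
    then show False using NF by blast
  next
    case 5
    then have "has_induced_N F" using abcd unfolding has_induced_N_def by blast
    then show False using NF by blast
  qed
qed

end
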